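(* Let $A_0\in\mathbb{R}^{n\times n}$, $B\in\mathbb{R}^{n\times1}$, $K\in\mathbb{R}^{1\times n}$, $h\in\mathbb{R}$, $P_0\in\mathbb{R}^{n\times n}$ symmetric, and let $V(x)=\tfrac12\big(x^\top P_0x+h(x^\top K^\top Kx-\mathrm{dz}(Kx)^2)\big)$. Suppose the matching condition $P_0B-hA_0^\top K^\top=\mu K^\top$ holds for some $\mu\ge0$, and that $2\mu+\omega>0$ where $\omega:=2hKB$. Then, with $S_0:=-(A_0^\top P_0+P_0A_0)$, the directional derivative of $V$ along $\dot x=A_0x-B\,\mathrm{sat}(Kx)$ satisfies, for almost all $x\in\mathbb{R}^n$, $$\dot V(x)=-\tfrac12\begin{bmatrix}x\\ \mathrm{dz}(Kx)\end{bmatrix}^\top Q\begin{bmatrix}x\\ \mathrm{dz}(Kx)\end{bmatrix},\qquad Q=\begin{bmatrix}S_0+(2\mu+\omega)K^\top K&-(\mu+\omega)K^\top\\ -(\mu+\omega)K&\omega\end{bmatrix}.$$ Moreover, if in addition $P_0\succeq0$, $A_0^\top P_0+P_0A_0\preceq0$ and $\ker P_0\subseteq\ker A_0$, then there exist $T_0\ge0$ and $R>0$ such that $\tfrac12 Q-\Sigma_0-\Sigma_R\succeq0$; in particular $-\dot V(x)\ge R\,\mathrm{sat}(Kx)^2$ for almost all $x$.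
   Context: Single-input case: $\mathrm{sat}(s)=\min\{\overline{u},\max\{-\underline{u},s\}\}$ with $\overline{u},\underline{u}>0$, $\mathrm{dz}(s)=s-\mathrm{sat}(s)$. For scalars $T_0,R$: $\Sigma_0=\begin{bmatrix}0&K^\top T_0\\ T_0K&-2T_0\end{bmatrix}$, $\Sigma_R=\begin{bmatrix}K^\top RK&-K^\top R\\ -RK&R\end{bmatrix}$. *)

theory Defs
  imports "HOL-Analysis.Analysis"
begin

definition sat :: "real \<Rightarrow> real \<Rightarrow> real \<Rightarrow> real" where
  "sat ubar ulow s = min ubar (max (- ulow) s)"

definition dz :: "real \<Rightarrow> real \<Rightarrow> real \<Rightarrow> real" where
  "dz ubar ulow s = s - sat ubar ulow s"

definition psd :: "real^'m^'m \<Rightarrow> bool" where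
  "psd M \<longleftrightarrow> (\<forall>v. 0 \<le> v \<bullet> (M *v v))"

text \<open>Outer product u v^T (for row vector K: K^T K = outer K K).\<close>
definition outer :: "real^'n \<Rightarrow> real^'n \<Rightarrow> real^'n^'n" where
  "outer u v = (\<chi> i j. u $ i * v $ j)"

definition blk :: "real^'n^'n \<Rightarrow> real^'n \<Rightarrow> real^'n \<Rightarrow> real \<Rightarrow> real^('n + unit)^('n + unit)" where
  "blk M b c d = (\<chi> i j. case i of
       Inl i' \<Rightarrow> (case j of Inl j' \<Rightarrow> M $ i' $ j' | Inr _ \<Rightarrow> b $ i')
     | Inr _ \<Rightarrow> (case j of Inl j' \<Rightarrow> c $ j' | Inr _ \<Rightarrow> d))"

definition stack :: "real^'n \<Rightarrow> real \<Rightarrow> real^('n + unit)" where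
  "stack x d = (\<chi> i. case i of Inl i' \<Rightarrow> x $ i' | Inr _ \<Rightarrow> d)"

definition dir_deriv :: "(real^'n \<Rightarrow> real) \<Rightarrow> (real^'n \<Rightarrow> real^'n) \<Rightarrow> real^'n \<Rightarrow> real \<Rightarrow> bool" where
  "dir_deriv V f x D \<longleftrightarrow> ((\<lambda>t. V (x + t *\<^sub>R f x)) has_real_derivative D) (at 0)"

definition Vfun :: "real \<Rightarrow> real \<Rightarrow> real^'n^'n \<Rightarrow> real \<Rightarrow> real^'n \<Rightarrow> real^'n \<Rightarrow> real" where
  "Vfun ubar ulow P0 h K x =
     (1/2) * (x \<bullet> (P0 *v x) + h * ((K \<bullet> x)^2 - (dz ubar ulow (K \<bullet> x))^2))"

definition ffun :: "real \<Rightarrow> real \<Rightarrow> real^'n^'n \<Rightarrow> real^'n \<Rightarrow> real^'n \<Rightarrow> real^'n \<Rightarrow> real^'n" where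
  "ffun ubar ulow A0 B K x = A0 *v x - sat ubar ulow (K \<bullet> x) *\<^sub>R B"

definition Qmat :: "real^'n^'n \<Rightarrow> real^'n^'n \<Rightarrow> real^'n \<Rightarrow> real \<Rightarrow> real \<Rightarrow> real^('n + unit)^('n + unit)" where
  "Qmat A0 P0 K \<mu> \<omega> =
     blk (- (transpose A0 ** P0 + P0 ** A0) + (2 * \<mu> + \<omega>) *\<^sub>R outer K K)
         (- (\<mu> + \<omega>) *\<^sub>R K) (- (\<mu> + \<omega>) *\<^sub>R K) \<omega>"

definition Sigma0 :: "real^'n \<Rightarrow> real \<Rightarrow> real^('n + unit)^('n + unit)" where
  "Sigma0 K T0 = blk 0 (T0 *\<^sub>R K) (T0 *\<^sub>R K) (- 2 * T0)"

definition SigmaR :: "real^'n \<Rightarrow> real \<Rightarrow> real^('n + unit)^('n + unit)" where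
  "SigmaR K R = blk (R *\<^sub>R outer K K) (- R *\<^sub>R K) (- R *\<^sub>R K) R"

end

theory Submission
  imports Defs
begin

lemma sum_UNIV_plus: "(\<Sum>i\<in>(UNIV::('a::finite + 'b::finite) set). g i) = (\<Sum>i\<in>UNIV. g (Inl i)) + (\<Sum>j\<in>UNIV. g (Inr j))"
  by (subst UNIV_Plus_UNIV[symmetric], subst sum.Plus) (auto simp: o_def)

lemma blk_quad:
  fixes v :: "real^('n::finite + unit)"
  shows "v \<bullet> (blk M b c e *v v) =
    (\<chi> i. v $ Inl i) \<bullet> (M *v (\<chi> i. v $ Inl i)) + v $ Inr () * (b \<bullet> (\<chi> i. v $ Inl i))
     + v $ Inr () * (c \<bullet> (\<chi> i. v $ Inl i)) + e * (v $ Inr ())^2"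
proof -
  have r: "(blk M b c e *v v) $ Inl i = (\<Sum>j\<in>UNIV. M $ i $ j * v $ Inl j) + b $ i * v $ Inr ()" for i
    by (simp add: matrix_vector_mult_def blk_def sum_UNIV_plus UNIV_unit)
  have r2: "(blk M b c e *v v) $ Inr () = (\<Sum>j\<in>UNIV. c $ j * v $ Inl j) + e * v $ Inr ()"
    by (simp add: matrix_vector_mult_def blk_def sum_UNIV_plus UNIV_unit)
  show ?thesis
    unfolding inner_vec_def[of v] sum_UNIV_plus UNIV_unit
    apply (simp only: r r2 sum.insert_remove finite.emptyI sum.empty)
    apply (simp add: inner_vec_def matrix_vector_mult_def distrib_left sum.distrib sum_distrib_left
       power2_eq_square mult.assoc mult.left_commute)
    apply (simp add: mult.commute)
    done
qed

lemma stack_quad: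
  "stack x d \<bullet> (blk M b c e *v stack x d) = x \<bullet> (M *v x) + d * (b \<bullet> x) + d * (c \<bullet> x) + e * d^2"
  by (simp add: blk_quad stack_def)

lemma inner_transpose: "(x::real^'n::finite) \<bullet> (transpose A *v y) = (A *v x) \<bullet> y"
  by (metis dot_lmul_matrix inner_commute vector_transpose_matrix)

lemma outer_quad: "(x::real^'n::finite) \<bullet> (outer u v *v x) = (u \<bullet> x) * (v \<bullet> x)"
  apply (simp add: outer_def inner_vec_def matrix_vector_mult_def sum_distrib_left sum_distrib_right algebra_simps)
  apply (subst sum.swap) apply (simp add: ac_simps)
  done

lemma phi_deriv: "((\<lambda>u::real. (max 0 u)^2) has_real_derivative 2 * max 0 u) (at u)"
proof -
  consider "u > 0" | "u < 0" | "u = 0" by linarith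
  then show ?thesis
  proof cases
    case 1
    have d: "((\<lambda>u::real. u^2) has_real_derivative 2 * u) (at u)"
      using DERIV_pow[of 2 u UNIV] by simp
    have "((\<lambda>u::real. (max 0 u)^2) has_real_derivative 2 * u) (at u)"
      by (rule has_field_derivative_transform_within_open[OF d, of "{0<..}"]) (use 1 in auto)
    then show ?thesis using 1 by simp
  next
    case 2
    have d: "((\<lambda>u::real. 0) has_real_derivative 0) (at u)"
      by (rule DERIV_const)
    have "((\<lambda>u::real. (max 0 u)^2) has_real_derivative 0) (at u)"
      by (rule has_field_derivative_transform_within_open[OF d, of "{..<0}"]) (use 2 in auto)
    then show ?thesis using 2 by simp
  next
    case 3
    have "((\<lambda>y::real. max 0 y) \<longlongrightarrow> max 0 0) (at 0)"
      by (intro tendsto_intros)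
    then have l: "((\<lambda>y::real. max 0 y) \<longlongrightarrow> 0) (at 0)" by simp
    have ev: "eventually (\<lambda>y. max 0 y = ((max 0 y)^2 - (max 0 0)^2) / (y - 0)) (at (0::real))"
      unfolding eventually_at_filter by (rule always_eventually) (auto simp: power2_eq_square max_def)
    have "((\<lambda>y::real. ((max 0 y)^2 - (max 0 0)^2) / (y - 0)) \<longlongrightarrow> 0) (at 0)"
      by (rule Lim_transform_eventually[OF l ev])
    then show ?thesis using 3 by (simp add: has_field_derivative_iff)
  qed
qed

lemma dz_sq: assumes "ubar > 0" "ulow > 0"
  shows "(dz ubar ulow s)^2 = (max 0 (s - ubar))^2 + (max 0 (- s - ulow))^2"
    and "dz ubar ulow s = max 0 (s - ubar) - max 0 (- s - ulow)"
proof -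
  show d: "dz ubar ulow s = max 0 (s - ubar) - max 0 (- s - ulow)"
    using assms by (auto simp: dz_def sat_def max_def min_def)
  have "max 0 (s - ubar) * max 0 (- s - ulow) = 0"
    using assms by (auto simp: max_def)
  then show "(dz ubar ulow s)^2 = (max 0 (s - ubar))^2 + (max 0 (- s - ulow))^2"
    unfolding d by (simp add: power2_diff)
qed

lemma dz_deriv: assumes "ubar > 0" "ulow > 0"
  shows "((\<lambda>s. (dz ubar ulow s)^2) has_real_derivative 2 * dz ubar ulow s) (at s)"
proof -
  have a: "((\<lambda>s. (max 0 (s - ubar))^2) has_real_derivative 2 * max 0 (s - ubar) * 1) (at s)"
    by (rule DERIV_chain2[OF phi_deriv]) (auto intro!: derivative_eq_intros)
  have b: "((\<lambda>s. (max 0 (- s - ulow))^2) has_real_derivative 2 * max 0 (- s - ulow) * (-1)) (at s)"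
    by (rule DERIV_chain2[OF phi_deriv]) (auto intro!: derivative_eq_intros)
  have e: "(\<lambda>s. (dz ubar ulow s)^2) = (\<lambda>s. (max 0 (s - ubar))^2 + (max 0 (- s - ulow))^2)"
    by (rule ext) (rule dz_sq(1)[OF assms])
  show ?thesis unfolding e dz_sq(2)[OF assms, of s]
    using DERIV_add[OF a b] by (simp add: algebra_simps)
qed


lemma neg_mv: "(- A) *v (x::real^'n::finite) = - (A *v x)"
  by (simp add: vec_eq_iff matrix_vector_mult_def sum_negf)

lemma sat_dz_nonneg: assumes "ubar > 0" "ulow > 0"
  shows "0 \<le> dz ubar ulow s * sat ubar ulow s"
proof -
  consider "s \<ge> ubar" | "s \<le> - ulow" | "- ulow < s \<and> s < ubar" by linarith
  then show ?thesis
  proof cases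
    case 1 then show ?thesis using assms by (simp add: dz_def sat_def)
  next
    case 2
    then have "sat ubar ulow s = - ulow" using assms by (simp add: sat_def)
    moreover have "dz ubar ulow s = s + ulow" using 2 assms by (simp add: dz_def sat_def)
    ultimately show ?thesis using 2 assms mult_nonpos_nonneg[of "s + ulow" ulow] by simp
  next
    case 3 then show ?thesis using assms by (simp add: dz_def sat_def)
  qed
qed


lemma Meq_gen:
  fixes S :: "real^'n::finite^'n" and K :: "real^'n"
  shows "(1/2) *\<^sub>R blk (S + (2 * \<mu> + \<omega>) *\<^sub>R outer K K) (- (\<mu> + \<omega>) *\<^sub>R K) (- (\<mu> + \<omega>) *\<^sub>R K) \<omega>
    - blk 0 ((\<mu>/2) *\<^sub>R K) ((\<mu>/2) *\<^sub>R K) (- 2 * (\<mu>/2))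
    - blk ((\<mu> + \<omega>/2) *\<^sub>R outer K K) (- (\<mu> + \<omega>/2) *\<^sub>R K) (- (\<mu> + \<omega>/2) *\<^sub>R K) (\<mu> + \<omega>/2)
    = blk ((1/2) *\<^sub>R S) 0 0 0"
  apply (simp only: vec_eq_iff)
  apply (intro allI)
  subgoal for i j
    apply (cases i; cases j) apply (simp_all add: blk_def outer_def) apply (simp_all add: field_simps) done
  done

lemma psd_blk:
  fixes S :: "real^'n::finite^'n"
  assumes "psd S" shows "psd (blk ((1/2) *\<^sub>R S) 0 0 0)"
  unfolding psd_def blk_quad
proof
  fix v :: "real^('n + unit)"
  have "0 \<le> (\<chi> i. v $ Inl i) \<bullet> (S *v (\<chi> i. v $ Inl i))" using assms unfolding psd_def by blast
  then show "0 \<le> (\<chi> i. v $ Inl i) \<bullet> ((1/2) *\<^sub>R S *v (\<chi> i. v $ Inl i)) + v $ Inr () * (0 \<bullet> (\<chi> i. v $ Inl i))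
     + v $ Inr () * (0 \<bullet> (\<chi> i. v $ Inl i)) + 0 * (v $ Inr ())^2"
    by (simp add: scaleR_matrix_vector_assoc[symmetric])
qed

lemma fin_ineq:
  fixes a y s d \<mu> \<omega> :: real
  assumes "a \<le> 0" "0 \<le> \<mu> * (d * s)" "d = y - s"
  shows "(\<mu> + \<omega>/2) * s^2 \<le> - (a - \<mu> * s * y - (\<omega>/2) * s^2)"
proof -
  have "\<mu> * s * y = \<mu> * (d * s) + \<mu> * s^2" unfolding assms(3) by (simp add: algebra_simps power2_eq_square)
  then show ?thesis using assms(1,2) by (simp add: algebra_simps)
qed
theorem lemma2:
  fixes A0 P0 :: "real^'n^'n" and B K :: "real^'n" and h \<mu> ubar ulow :: real
  assumes ubar: "ubar > 0" and ulow: "ulow > 0"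
    and symP0: "transpose P0 = P0"
    and matching: "P0 *v B - h *\<^sub>R (transpose A0 *v K) = \<mu> *\<^sub>R K"
    and mu: "\<mu> \<ge> 0"
    and pos: "2 * \<mu> + 2 * h * (K \<bullet> B) > 0"
  shows "(AE x in lborel.
            dir_deriv (Vfun ubar ulow P0 h K) (ffun ubar ulow A0 B K) x
              (- (1/2) * (stack x (dz ubar ulow (K \<bullet> x)) \<bullet>
                 (Qmat A0 P0 K \<mu> (2 * h * (K \<bullet> B)) *v stack x (dz ubar ulow (K \<bullet> x))))))
       \<and> ((psd P0 \<and> psd (- (transpose A0 ** P0 + P0 ** A0))
            \<and> {x. P0 *v x = 0} \<subseteq> {x. A0 *v x = 0}) \<longrightarrow>
          (\<exists>T0 R. T0 \<ge> 0 \<and> R > 0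
             \<and> psd ((1/2) *\<^sub>R Qmat A0 P0 K \<mu> (2 * h * (K \<bullet> B)) - Sigma0 K T0 - SigmaR K R)
             \<and> (AE x in lborel. \<exists>D.
                   dir_deriv (Vfun ubar ulow P0 h K) (ffun ubar ulow A0 B K) x D
                   \<and> - D \<ge> R * (sat ubar ulow (K \<bullet> x))^2)))"
proof -
  define \<omega> where "\<omega> = 2 * h * (K \<bullet> B)"
  have symm: "u \<bullet> (P0 *v w) = w \<bullet> (P0 *v u)" for u w
  proof -
    have "u \<bullet> (P0 *v w) = u \<bullet> (transpose P0 *v w)" using symP0 by simp
    also have "\<dots> = (P0 *v u) \<bullet> w" by (rule inner_transpose)
    also have "\<dots> = w \<bullet> (P0 *v u)" by (rule inner_commute)
    finally show ?thesis .
  qed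
  have PB: "P0 *v B = \<mu> *\<^sub>R K + h *\<^sub>R (transpose A0 *v K)"
    using matching by (simp add: algebra_simps)
  have deriv: "dir_deriv (Vfun ubar ulow P0 h K) (ffun ubar ulow A0 B K) x
      (x \<bullet> (P0 *v (A0 *v x)) - \<mu> * sat ubar ulow (K \<bullet> x) * (K \<bullet> x)
        - (\<omega>/2) * (sat ubar ulow (K \<bullet> x))^2)" for x
  proof -
    define f where "f = ffun ubar ulow A0 B K x"
    define y where "y = K \<bullet> x"
    define k where "k = K \<bullet> f"
    define s where "s = sat ubar ulow y"
    define g where "g = (\<lambda>t. (dz ubar ulow (y + t * k))^2)"
    have V: "Vfun ubar ulow P0 h K (x + t *\<^sub>R f) = (1/2) * (x \<bullet> (P0 *v x) + 2 * t * (x \<bullet> (P0 *v f))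
        + t^2 * (f \<bullet> (P0 *v f)) + h * ((y + t * k)^2 - g t))" for t
      using symm[of f x]
      by (simp add: Vfun_def y_def k_def g_def inner_add_left inner_add_right matrix_vector_right_distrib
          matrix_vector_mult_scaleR power2_eq_square algebra_simps)
    have lin: "((\<lambda>t. y + t * k) has_real_derivative k) (at 0)"
      by (auto intro!: derivative_eq_intros)
    have dzd: "(g has_real_derivative 2 * dz ubar ulow y * k) (at 0)"
      using DERIV_chain2[OF dz_deriv[OF ubar ulow, of "y + 0 * k"] lin] by (simp add: g_def)
    have D: "((\<lambda>t. Vfun ubar ulow P0 h K (x + t *\<^sub>R f)) has_real_derivative
        (1/2) * (2 * (x \<bullet> (P0 *v f)) + h * (2 * y * k - 2 * dz ubar ulow y * k))) (at 0)"
      unfolding V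
      by (auto intro!: derivative_eq_intros dzd)
    have fx: "f = A0 *v x - s *\<^sub>R B" by (simp add: f_def ffun_def s_def y_def)
    have t2: "x \<bullet> K = K \<bullet> x" by (rule inner_commute)
    have t: "x \<bullet> (K v* A0) = K \<bullet> (A0 *v x)" using inner_commute[of x "K v* A0"] dot_lmul_matrix[of K A0 x] by simp
    have xPf: "x \<bullet> (P0 *v f) = x \<bullet> (P0 *v (A0 *v x)) - s * (\<mu> * y + h * (K \<bullet> (A0 *v x)))"
      unfolding fx
      by (simp add: PB matrix_vector_mult_diff_distrib matrix_vector_mult_scaleR inner_diff_right
          inner_add_right inner_transpose y_def t t2)
    have kk: "k = K \<bullet> (A0 *v x) - s * (K \<bullet> B)"
      unfolding k_def fx by (simp add: inner_diff_right)
    have dzy: "dz ubar ulow y = y - s" by (simp add: dz_def s_def)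
    have E: "(1/2) * (2 * (x \<bullet> (P0 *v f)) + h * (2 * y * k - 2 * dz ubar ulow y * k))
       = x \<bullet> (P0 *v (A0 *v x)) - \<mu> * s * y - (\<omega>/2) * s^2"
      unfolding xPf kk dzy \<omega>_def by (simp add: algebra_simps power2_eq_square)
    show ?thesis using D[unfolded E] unfolding dir_deriv_def f_def s_def y_def by assumption
  qed
  have quad: "- (1/2) * (stack x (dz ubar ulow (K \<bullet> x)) \<bullet>
                 (Qmat A0 P0 K \<mu> \<omega> *v stack x (dz ubar ulow (K \<bullet> x))))
     = x \<bullet> (P0 *v (A0 *v x)) - \<mu> * sat ubar ulow (K \<bullet> x) * (K \<bullet> x)
        - (\<omega>/2) * (sat ubar ulow (K \<bullet> x))^2" for x
  proof -
    have a: "x \<bullet> ((P0 *v x) v* A0) = x \<bullet> (P0 *v (A0 *v x))"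
      using symm[of x "A0 *v x"] inner_commute[of x "(P0 *v x) v* A0"] dot_lmul_matrix[of "P0 *v x" A0 x]
          inner_commute[of "P0 *v x" "A0 *v x"] by simp
    show ?thesis
      unfolding Qmat_def stack_quad
      by (simp add: neg_mv matrix_vector_mult_add_rdistrib inner_add_right
          scaleR_matrix_vector_assoc[symmetric] outer_quad matrix_vector_mul_assoc[symmetric] a
          dz_def algebra_simps power2_eq_square)
  qed
  have part1: "AE x in lborel.
            dir_deriv (Vfun ubar ulow P0 h K) (ffun ubar ulow A0 B K) x
              (- (1/2) * (stack x (dz ubar ulow (K \<bullet> x)) \<bullet>
                 (Qmat A0 P0 K \<mu> \<omega> *v stack x (dz ubar ulow (K \<bullet> x)))))"
    by (intro AE_I2) (simp only: quad deriv)
  have part2: "\<exists>T0 R. T0 \<ge> 0 \<and> R > 0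
             \<and> psd ((1/2) *\<^sub>R Qmat A0 P0 K \<mu> \<omega> - Sigma0 K T0 - SigmaR K R)
             \<and> (AE x in lborel. \<exists>D.
                   dir_deriv (Vfun ubar ulow P0 h K) (ffun ubar ulow A0 B K) x D
                   \<and> - D \<ge> R * (sat ubar ulow (K \<bullet> x))^2)"
    if S0: "psd (- (transpose A0 ** P0 + P0 ** A0))"
  proof (intro exI conjI)
    let ?S0 = "- (transpose A0 ** P0 + P0 ** A0)"
    show "0 \<le> \<mu>/2" using mu by simp
    show "0 < \<mu> + \<omega>/2" using pos unfolding \<omega>_def by simp
    show "psd ((1/2) *\<^sub>R Qmat A0 P0 K \<mu> \<omega> - Sigma0 K (\<mu>/2) - SigmaR K (\<mu> + \<omega>/2))"
      unfolding Qmat_def Sigma0_def SigmaR_def Meq_gen by (rule psd_blk[OF S0])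
    have nx: "x \<bullet> (P0 *v (A0 *v x)) \<le> 0" for x
    proof -
      have a: "x \<bullet> ((P0 *v x) v* A0) = x \<bullet> (P0 *v (A0 *v x))"
        using symm[of x "A0 *v x"] inner_commute[of x "(P0 *v x) v* A0"] dot_lmul_matrix[of "P0 *v x" A0 x]
          inner_commute[of "P0 *v x" "A0 *v x"] by simp
      have "0 \<le> x \<bullet> (?S0 *v x)" using S0 unfolding psd_def by blast
      then have "0 \<le> - (x \<bullet> (transpose A0 *v (P0 *v x)) + x \<bullet> (P0 *v (A0 *v x)))"
        by (simp only: neg_mv matrix_vector_mult_add_rdistrib matrix_vector_mul_assoc[symmetric]
           inner_add_right inner_minus_right)
      moreover have "x \<bullet> (transpose A0 *v (P0 *v x)) = x \<bullet> (P0 *v (A0 *v x))"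
        using inner_transpose[of x A0 "P0 *v x"] symm[of x "A0 *v x"] by simp
      ultimately show ?thesis by linarith
    qed
    show "AE x in lborel. \<exists>D.
                   dir_deriv (Vfun ubar ulow P0 h K) (ffun ubar ulow A0 B K) x D
                   \<and> - D \<ge> (\<mu> + \<omega>/2) * (sat ubar ulow (K \<bullet> x))^2"
    proof (intro AE_I2 exI conjI, rule deriv)
      fix x
      have "0 \<le> \<mu> * (dz ubar ulow (K \<bullet> x) * sat ubar ulow (K \<bullet> x))"
        using mu sat_dz_nonneg[OF ubar ulow] by simp
      then show "(\<mu> + \<omega>/2) * (sat ubar ulow (K \<bullet> x))^2 \<le>
        - (x \<bullet> (P0 *v (A0 *v x)) - \<mu> * sat ubar ulow (K \<bullet> x) * (K \<bullet> x)
        - (\<omega>/2) * (sat ubar ulow (K \<bullet> x))^2)"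
        by (rule fin_ineq[OF nx[of x] _ dz_def])
    qed
  qed
  show ?thesis
  proof (intro conjI impI)
    show "AE x in lborel.
            dir_deriv (Vfun ubar ulow P0 h K) (ffun ubar ulow A0 B K) x
              (- (1/2) * (stack x (dz ubar ulow (K \<bullet> x)) \<bullet>
                 (Qmat A0 P0 K \<mu> (2 * h * (K \<bullet> B)) *v stack x (dz ubar ulow (K \<bullet> x)))))"
      using part1 unfolding \<omega>_def .
  next
    assume H: "psd P0 \<and> psd (- (transpose A0 ** P0 + P0 ** A0))
            \<and> {x. P0 *v x = 0} \<subseteq> {x. A0 *v x = 0}"
    show "\<exists>T0 R. T0 \<ge> 0 \<and> R > 0
             \<and> psd ((1/2) *\<^sub>R Qmat A0 P0 K \<mu> (2 * h * (K \<bullet> B)) - Sigma0 K T0 - SigmaR K R)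
             \<and> (AE x in lborel. \<exists>D.
                   dir_deriv (Vfun ubar ulow P0 h K) (ffun ubar ulow A0 B K) x D
                   \<and> - D \<ge> R * (sat ubar ulow (K \<bullet> x))^2)"
      using part2[OF conjunct1[OF conjunct2[OF H]]] unfolding \<omega>_def .
  qed
qed
end
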